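(* Let $\psi:\mathsf F\Rightarrow\mathsf G$ be a morphism between constructible cosheaves with a common critical set $S=\{a_0<a_1<\dots<a_n\}$, and set $a_{-1}=-\infty$, $a_{n+1}=+\infty$. If $\psi_I$ is a bijection for every interval of the form $I=(a_{i-1},a_{i+1})$ ($0\le i\le n$) and $I=(a_i,a_{i+1})$ ($0\le i\le n-1$), then $\psi$ is an isomorphism of cosheaves (a natural isomorphism).
   Context: $\mathbf{Int}$ is the category whose objects are the open intervals of $\mathbb{R}$ (including unbounded ones and the empty set) and whose morphisms are inclusions. A pre-cosheaf is a functor $\mathsf F:\mathbf{Int}\to\mathbf{Set}$; $\mathsf F[I\subseteq J]$ denotes the image of an inclusion; morphisms are natural transformations. A cosheaf is a pre-cosheaf such that for every open interval $U$ and every family $(I_p)$ of open intervals with union $U$, $\mathsf F(U)$ with the maps $\mathsf F[I_p\subseteq U]$ is the colimit of $\coprod_{p,q}\mathsf F(I_p\cap I_q)\rightrightarrows\coprod_p\mathsf F(I_p)$ (arrows induced by the inclusions $I_p\cap I_q\subseteq I_p$, $I_p\cap I_q\subseteq I_q$). A (pre-)cosheaf is constructible if every $\mathsf F(I)$ is finite and there is a finite $S\subset\mathbb R$ such that $\mathsf F[I\subseteq J]$ is a bijection whenever $I\subseteq J$ and $I\cap S=J\cap S$, and $\mathsf F(I)=\emptyset$ whenever $I\subseteq(-\infty,\min S)$ or $I\subseteq(\max S,\infty)$. *)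

theory Defs
  imports "HOL-Library.Extended_Real"
begin

definition oint :: "ereal \<Rightarrow> ereal \<Rightarrow> real set" where
  "oint l u = {x. l < ereal x \<and> ereal x < u}"

definition is_oint :: "real set \<Rightarrow> bool" where
  "is_oint I \<longleftrightarrow> (\<exists>l u. I = oint l u)"

text \<open>A pre-cosheaf on Int: an object map F (values are subsets of a type 'a)
  and a map Fm with Fm I J = F[I \<subseteq> J], satisfying functoriality.\<close>
definition precosheaf :: "(real set \<Rightarrow> 'a set) \<Rightarrow> (real set \<Rightarrow> real set \<Rightarrow> 'a \<Rightarrow> 'a) \<Rightarrow> bool" where
  "precosheaf F Fm \<longleftrightarrow>
     (\<forall>I J. is_oint I \<and> is_oint J \<and> I \<subseteq> J \<longrightarrow> (\<forall>x\<in>F I. Fm I J x \<in> F J)) \<and>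
     (\<forall>I. is_oint I \<longrightarrow> (\<forall>x\<in>F I. Fm I I x = x)) \<and>
     (\<forall>I J K. is_oint I \<and> is_oint J \<and> is_oint K \<and> I \<subseteq> J \<and> J \<subseteq> K \<longrightarrow>
        (\<forall>x\<in>F I. Fm J K (Fm I J x) = Fm I K x))"

text \<open>Generating relation of the coequalizer of
  \<open>\<Sum>_{p,q} F(I_p \<inter> I_q) \<rightrightarrows> \<Sum>_p F(I_p)\<close> on the disjoint union
  (elements tagged by their interval).\<close>
definition glue_rel :: "(real set \<Rightarrow> 'a set) \<Rightarrow> (real set \<Rightarrow> real set \<Rightarrow> 'a \<Rightarrow> 'a)
    \<Rightarrow> real set set \<Rightarrow> ((real set \<times> 'a) \<times> (real set \<times> 'a)) set" where
  "glue_rel F Fm \<J> = {((I, Fm (I \<inter> J) I z), (J, Fm (I \<inter> J) J z)) | I J z.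
                        I \<in> \<J> \<and> J \<in> \<J> \<and> z \<in> F (I \<inter> J)}"

text \<open>F(U) with the maps F[I \<subseteq> U] (I in the family) is the colimit in Set
  of the coequalizer diagram: the induced map from the quotient of the disjoint union
  by the generated equivalence relation to F(U) is a bijection.\<close>
definition is_colimit_cover :: "(real set \<Rightarrow> 'a set) \<Rightarrow> (real set \<Rightarrow> real set \<Rightarrow> 'a \<Rightarrow> 'a)
    \<Rightarrow> real set \<Rightarrow> real set set \<Rightarrow> bool" where
  "is_colimit_cover F Fm U \<J> \<longleftrightarrow>
     (\<forall>y\<in>F U. \<exists>I\<in>\<J>. \<exists>x\<in>F I. Fm I U x = y) \<and>
     (\<forall>I\<in>\<J>. \<forall>J\<in>\<J>. \<forall>x\<in>F I. \<forall>x'\<in>F J.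
        Fm I U x = Fm J U x' \<longleftrightarrow> ((I, x), (J, x')) \<in> (glue_rel F Fm \<J>)\<^sup>*)"

definition cosheaf :: "(real set \<Rightarrow> 'a set) \<Rightarrow> (real set \<Rightarrow> real set \<Rightarrow> 'a \<Rightarrow> 'a) \<Rightarrow> bool" where
  "cosheaf F Fm \<longleftrightarrow> precosheaf F Fm \<and>
     (\<forall>U \<J>. is_oint U \<and> (\<forall>I\<in>\<J>. is_oint I) \<and> \<Union>\<J> = U \<longrightarrow> is_colimit_cover F Fm U \<J>)"

definition constructible_wrt :: "(real set \<Rightarrow> 'a set) \<Rightarrow> (real set \<Rightarrow> real set \<Rightarrow> 'a \<Rightarrow> 'a)
    \<Rightarrow> real set \<Rightarrow> bool" where
  "constructible_wrt F Fm S \<longleftrightarrow> finite S \<and>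
     (\<forall>I. is_oint I \<longrightarrow> finite (F I)) \<and>
     (\<forall>I J. is_oint I \<and> is_oint J \<and> I \<subseteq> J \<and> I \<inter> S = J \<inter> S \<longrightarrow> bij_betw (Fm I J) (F I) (F J)) \<and>
     (\<forall>I. is_oint I \<and> ((\<forall>s\<in>S. I \<subseteq> {..<s}) \<or> (\<forall>s\<in>S. I \<subseteq> {s<..})) \<longrightarrow> F I = {})"

definition nat_trans :: "(real set \<Rightarrow> 'a set) \<Rightarrow> (real set \<Rightarrow> real set \<Rightarrow> 'a \<Rightarrow> 'a)
    \<Rightarrow> (real set \<Rightarrow> 'b set) \<Rightarrow> (real set \<Rightarrow> real set \<Rightarrow> 'b \<Rightarrow> 'b) \<Rightarrow> (real set \<Rightarrow> 'a \<Rightarrow> 'b) \<Rightarrow> bool" where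
  "nat_trans F Fm G Gm \<psi> \<longleftrightarrow>
     (\<forall>I. is_oint I \<longrightarrow> (\<forall>x\<in>F I. \<psi> I x \<in> G I)) \<and>
     (\<forall>I J. is_oint I \<and> is_oint J \<and> I \<subseteq> J \<longrightarrow> (\<forall>x\<in>F I. \<psi> J (Fm I J x) = Gm I J (\<psi> I x)))"

definition nat_iso :: "(real set \<Rightarrow> 'a set) \<Rightarrow> (real set \<Rightarrow> real set \<Rightarrow> 'a \<Rightarrow> 'a)
    \<Rightarrow> (real set \<Rightarrow> 'b set) \<Rightarrow> (real set \<Rightarrow> real set \<Rightarrow> 'b \<Rightarrow> 'b) \<Rightarrow> (real set \<Rightarrow> 'a \<Rightarrow> 'b) \<Rightarrow> bool" where
  "nat_iso F Fm G Gm \<psi> \<longleftrightarrow> nat_trans F Fm G Gm \<psi> \<and>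
     (\<exists>\<phi>. nat_trans G Gm F Fm \<phi> \<and>
        (\<forall>I. is_oint I \<longrightarrow> (\<forall>x\<in>F I. \<phi> I (\<psi> I x) = x) \<and> (\<forall>y\<in>G I. \<psi> I (\<phi> I y) = y)))"

text \<open>Endpoint a_k of the extended list a_{-1} = -\<infinity>, a_0, ..., a_n, a_{n+1} = +\<infinity>.\<close>
definition bnd :: "(nat \<Rightarrow> real) \<Rightarrow> nat \<Rightarrow> int \<Rightarrow> ereal" where
  "bnd a n k = (if k < 0 then -\<infinity> else if k > int n then \<infinity> else ereal (a (nat k)))"

end

theory Submission
  imports Defs
begin

lemma oint_Int: "oint l u \<inter> oint l' u' = oint (max l l') (min u u')"
  unfolding oint_def by auto

lemma is_oint_Int: "is_oint I \<Longrightarrow> is_oint J \<Longrightarrow> is_oint (I \<inter> J)"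
  unfolding is_oint_def using oint_Int by blast

lemma pc_into:
  assumes "precosheaf F Fm" "is_oint I" "is_oint J" "I \<subseteq> J" "x \<in> F I"
  shows "Fm I J x \<in> F J"
proof -
  have h: "\<forall>I J. is_oint I \<and> is_oint J \<and> I \<subseteq> J \<longrightarrow> (\<forall>x\<in>F I. Fm I J x \<in> F J)"
    using assms(1) unfolding precosheaf_def by (rule conjunct1)
  show ?thesis using h[rule_format, of I J x] assms by simp
qed

lemma nt_into:
  assumes "nat_trans F Fm G Gm \<psi>" "is_oint I" "x \<in> F I"
  shows "\<psi> I x \<in> G I"
proof -
  have h: "\<forall>I. is_oint I \<longrightarrow> (\<forall>x\<in>F I. \<psi> I x \<in> G I)"
    using assms(1) unfolding nat_trans_def by (rule conjunct1)
  show ?thesis using h[rule_format, of I x] assms by simp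
qed

lemma nt_nat:
  assumes "nat_trans F Fm G Gm \<psi>" "is_oint I" "is_oint J" "I \<subseteq> J" "x \<in> F I"
  shows "\<psi> J (Fm I J x) = Gm I J (\<psi> I x)"
proof -
  have h: "\<forall>I J. is_oint I \<and> is_oint J \<and> I \<subseteq> J \<longrightarrow> (\<forall>x\<in>F I. \<psi> J (Fm I J x) = Gm I J (\<psi> I x))"
    using assms(1) unfolding nat_trans_def by (rule conjunct2)
  show ?thesis using h[rule_format, of I J x] assms by simp
qed

lemma cosheaf_pre: "cosheaf F Fm \<Longrightarrow> precosheaf F Fm"
  unfolding cosheaf_def by (rule conjunct1)

lemma cosheaf_col:
  assumes "cosheaf F Fm" "is_oint U" "\<forall>I\<in>\<J>. is_oint I" "\<Union>\<J> = U"
  shows "is_colimit_cover F Fm U \<J>"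
proof -
  have h: "\<forall>U \<J>. is_oint U \<and> (\<forall>I\<in>\<J>. is_oint I) \<and> \<Union>\<J> = U \<longrightarrow> is_colimit_cover F Fm U \<J>"
    using assms(1) unfolding cosheaf_def by (rule conjunct2)
  show ?thesis using h[rule_format, of U \<J>] assms by simp
qed

lemma col_surj:
  assumes "is_colimit_cover F Fm U \<J>" "y \<in> F U"
  obtains I x where "I \<in> \<J>" "x \<in> F I" "Fm I U x = y"
  using assms unfolding is_colimit_cover_def by (meson conjunct1)

lemma col_eq:
  assumes "is_colimit_cover F Fm U \<J>" "I \<in> \<J>" "J \<in> \<J>" "x \<in> F I" "x' \<in> F J"
  shows "Fm I U x = Fm J U x' \<longleftrightarrow> ((I, x), (J, x')) \<in> (glue_rel F Fm \<J>)\<^sup>*"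
proof -
  have h: "\<forall>I\<in>\<J>. \<forall>J\<in>\<J>. \<forall>x\<in>F I. \<forall>x'\<in>F J.
        Fm I U x = Fm J U x' \<longleftrightarrow> ((I, x), (J, x')) \<in> (glue_rel F Fm \<J>)\<^sup>*"
    using assms(1) unfolding is_colimit_cover_def by (rule conjunct2)
  show ?thesis using h assms(2-5) by blast
qed

lemma cw_bij:
  assumes "constructible_wrt F Fm S" "is_oint I" "is_oint J" "I \<subseteq> J" "I \<inter> S = J \<inter> S"
  shows "bij_betw (Fm I J) (F I) (F J)"
proof -
  have h: "\<forall>I J. is_oint I \<and> is_oint J \<and> I \<subseteq> J \<and> I \<inter> S = J \<inter> S \<longrightarrow> bij_betw (Fm I J) (F I) (F J)"
    using assms(1) unfolding constructible_wrt_def by (elim conjE)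
  show ?thesis using h[rule_format, of I J] assms by simp
qed

lemma cw_empty:
  assumes "constructible_wrt F Fm S" "is_oint I" "(\<forall>s\<in>S. I \<subseteq> {..<s}) \<or> (\<forall>s\<in>S. I \<subseteq> {s<..})"
  shows "F I = {}"
proof -
  have h: "\<forall>I. is_oint I \<and> ((\<forall>s\<in>S. I \<subseteq> {..<s}) \<or> (\<forall>s\<in>S. I \<subseteq> {s<..})) \<longrightarrow> F I = {}"
    using assms(1) unfolding constructible_wrt_def by (elim conjE)
  show ?thesis using h[rule_format, of I] assms by simp
qed

lemma lift_chain:
  assumes pF: "precosheaf F Fm" and nt: "nat_trans F Fm G Gm \<psi>"
    and oi: "\<forall>I\<in>\<J>. is_oint I"
    and bj: "\<forall>I\<in>\<J>. \<forall>J\<in>\<J>. bij_betw (\<psi> (I \<inter> J)) (F (I \<inter> J)) (G (I \<inter> J))"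
    and ch: "((I0, \<psi> I0 x0), (K, v)) \<in> (glue_rel G Gm \<J>)\<^sup>*"
    and I0: "I0 \<in> \<J>" and x0: "x0 \<in> F I0"
  shows "\<exists>x'\<in>F K. v = \<psi> K x' \<and> ((I0, x0), (K, x')) \<in> (glue_rel F Fm \<J>)\<^sup>*"
  using ch
proof (induction K v rule: rtrancl_induct2)
  case refl
  then show ?case using x0 by auto
next
  case (step K v K2 v2)
  from step.hyps(2) obtain I J z where eq1: "K = I" "v = Gm (I \<inter> J) I z"
    and eq2: "K2 = J" "v2 = Gm (I \<inter> J) J z" and IJ: "I \<in> \<J>" "J \<in> \<J>" "z \<in> G (I \<inter> J)"
    unfolding glue_rel_def by auto
  from step.IH obtain x' where x': "x' \<in> F K" "v = \<psi> K x'"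
    and r: "((I0, x0), (K, x')) \<in> (glue_rel F Fm \<J>)\<^sup>*" by blast
  have bIJ: "bij_betw (\<psi> (I \<inter> J)) (F (I \<inter> J)) (G (I \<inter> J))" using bj IJ by blast
  then obtain w where w: "w \<in> F (I \<inter> J)" "z = \<psi> (I \<inter> J) w"
    using IJ(3) unfolding bij_betw_def by blast
  have oI: "is_oint I" and oJ: "is_oint J" using oi IJ by auto
  have oIJ: "is_oint (I \<inter> J)" using is_oint_Int[OF oI oJ] .
  have bI: "bij_betw (\<psi> I) (F I) (G I)" using bj IJ(1) by (metis Int_absorb)
  have wI: "Fm (I \<inter> J) I w \<in> F I" and wJ: "Fm (I \<inter> J) J w \<in> F J"
    using pc_into[OF pF oIJ oI _ w(1)] pc_into[OF pF oIJ oJ _ w(1)] by auto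
  have n1: "\<psi> I (Fm (I \<inter> J) I w) = Gm (I \<inter> J) I (\<psi> (I \<inter> J) w)"
    using nt_nat[OF nt oIJ oI _ w(1)] by auto
  have n2: "\<psi> J (Fm (I \<inter> J) J w) = Gm (I \<inter> J) J (\<psi> (I \<inter> J) w)"
    using nt_nat[OF nt oIJ oJ _ w(1)] by auto
  have "\<psi> I x' = \<psi> I (Fm (I \<inter> J) I w)" using x' eq1 n1 w by simp
  hence xe: "x' = Fm (I \<inter> J) I w"
    using bI x' eq1 wI unfolding bij_betw_def inj_on_def by blast
  have "((I, x'), (J, Fm (I \<inter> J) J w)) \<in> glue_rel F Fm \<J>"
    unfolding glue_rel_def xe using IJ w(1) by blast
  with r eq1 have "((I0, x0), (K2, Fm (I \<inter> J) J w)) \<in> (glue_rel F Fm \<J>)\<^sup>*"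
    using eq2 by auto
  moreover have "v2 = \<psi> K2 (Fm (I \<inter> J) J w)" using eq2 n2 w by simp
  ultimately show ?case using wJ eq2 by blast
qed

lemma glue_bij:
  assumes cF: "cosheaf F Fm" and cG: "cosheaf G Gm" and nt: "nat_trans F Fm G Gm \<psi>"
    and oU: "is_oint U" and oi: "\<forall>I\<in>\<J>. is_oint I" and un: "\<Union>\<J> = U"
    and bj: "\<forall>I\<in>\<J>. \<forall>J\<in>\<J>. bij_betw (\<psi> (I \<inter> J)) (F (I \<inter> J)) (G (I \<inter> J))"
  shows "bij_betw (\<psi> U) (F U) (G U)"
proof -
  have pF: "precosheaf F Fm" using cosheaf_pre[OF cF] .
  have colF: "is_colimit_cover F Fm U \<J>" using cosheaf_col[OF cF oU oi un] .
  have colG: "is_colimit_cover G Gm U \<J>" using cosheaf_col[OF cG oU oi un] .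
  have bI: "\<And>I. I \<in> \<J> \<Longrightarrow> bij_betw (\<psi> I) (F I) (G I)" using bj by (metis Int_absorb)
  have sub: "\<And>I. I \<in> \<J> \<Longrightarrow> I \<subseteq> U" using un by blast
  have nat: "\<And>I x. I \<in> \<J> \<Longrightarrow> x \<in> F I \<Longrightarrow> \<psi> U (Fm I U x) = Gm I U (\<psi> I x)"
    using nt_nat[OF nt _ oU] oi sub by blast
  have into: "\<psi> U ` F U \<subseteq> G U" using nt_into[OF nt oU] by blast
  have FmU: "\<And>I x. I \<in> \<J> \<Longrightarrow> x \<in> F I \<Longrightarrow> Fm I U x \<in> F U"
    using pc_into[OF pF _ oU] oi sub by blast
  have onto: "G U \<subseteq> \<psi> U ` F U"
  proof
    fix y assume y: "y \<in> G U"
    then obtain I x where I: "I \<in> \<J>" "x \<in> G I" "Gm I U x = y"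
      using col_surj[OF colG y] by metis
    then obtain w where w: "w \<in> F I" "x = \<psi> I w" using bI[OF I(1)] unfolding bij_betw_def by blast
    show "y \<in> \<psi> U ` F U" using nat[OF I(1) w(1)] I w FmU by (metis image_eqI)
  qed
  have inj: "inj_on (\<psi> U) (F U)"
  proof (rule inj_onI)
    fix u v assume u: "u \<in> F U" and v: "v \<in> F U" and e: "\<psi> U u = \<psi> U v"
    obtain I x where I: "I \<in> \<J>" "x \<in> F I" "Fm I U x = u"
      using col_surj[OF colF u] by metis
    obtain J x' where J: "J \<in> \<J>" "x' \<in> F J" "Fm J U x' = v"
      using col_surj[OF colF v] by metis
    have gI: "\<psi> I x \<in> G I" and gJ: "\<psi> J x' \<in> G J"
      using bI I J unfolding bij_betw_def by auto
    have "Gm I U (\<psi> I x) = Gm J U (\<psi> J x')" using e nat I J by metis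
    hence "((I, \<psi> I x), (J, \<psi> J x')) \<in> (glue_rel G Gm \<J>)\<^sup>*"
      using col_eq[OF colG I(1) J(1) gI gJ] by simp
    from lift_chain[OF pF nt oi bj this I(1) I(2)] obtain x'' where
      x'': "x'' \<in> F J" "\<psi> J x' = \<psi> J x''" "((I, x), (J, x'')) \<in> (glue_rel F Fm \<J>)\<^sup>*" by blast
    have "x' = x''" using bI[OF J(1)] x'' J(2) unfolding bij_betw_def inj_on_def by blast
    hence "Fm I U x = Fm J U x'" using col_eq[OF colF I(1) J(1) I(2) J(2)] x'' by simp
    thus "u = v" using I J by simp
  qed
  show ?thesis unfolding bij_betw_def using inj into onto by blast
qed
lemma amono:
  assumes m: "\<forall>i<n. a i < a (Suc i)" and "i < j" and "j \<le> n"
  shows "a i < (a j :: real)"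
  using assms(2,3)
proof (induction j)
  case 0 then show ?case by simp
next
  case (Suc j)
  have jn: "j < n" using Suc.prems(2) by simp
  have step: "a j < a (Suc j)" using m jn by blast
  show ?case
  proof (cases "i = j")
    case True then show ?thesis using step by simp
  next
    case False
    hence "i < j" using Suc.prems(1) by simp
    hence "a i < a j" using Suc.IH jn by simp
    thus ?thesis using step by (rule less_trans)
  qed
qed

lemma amono_le:
  assumes "\<forall>i<n. a i < a (Suc i)" and "i \<le> j" and "j \<le> n"
  shows "a i \<le> (a j :: real)"
proof (cases "i = j")
  case True thus ?thesis by simp
next
  case False
  hence "i < j" using assms(2) by simp
  thus ?thesis using amono[OF assms(1) _ assms(3)] by (simp add: less_imp_le)
qed

lemma bnd_neg: "k < 0 \<Longrightarrow> bnd a n k = -\<infinity>"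
  unfolding bnd_def by simp

lemma bnd_big: "0 \<le> k \<Longrightarrow> k > int n \<Longrightarrow> bnd a n k = \<infinity>"
  unfolding bnd_def by simp

lemma bnd_mid: "0 \<le> k \<Longrightarrow> k \<le> int n \<Longrightarrow> bnd a n k = ereal (a (nat k))"
  unfolding bnd_def by simp

lemma bnd_nat: "k \<le> n \<Longrightarrow> bnd a n (int k) = ereal (a k)"
  using bnd_mid[of "int k" n a] by simp

lemma bnd_less:
  assumes m: "\<forall>i<n. a i < a (Suc i)" and "-1 \<le> x" "y \<le> int n + 1" "x < y"
  shows "bnd a n x < bnd a n y"
proof -
  consider "x < 0" | "y > int n" "0 \<le> x" | "0 \<le> x" "y \<le> int n" using assms by linarith
  then show ?thesis
  proof cases
    case 1
    have "0 \<le> y" using 1 assms by linarith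
    hence "bnd a n y \<noteq> -\<infinity>" unfolding bnd_def by simp
    thus ?thesis using bnd_neg[OF 1] by (cases "bnd a n y") simp_all
  next
    case 2
    have "x \<le> int n" using 2 assms by linarith
    hence "bnd a n x \<noteq> \<infinity>" unfolding bnd_def by simp
    thus ?thesis using bnd_big[of y n a] 2 by (cases "bnd a n x") simp_all
  next
    case 3
    have "nat x < nat y" "nat y \<le> n" using 3 assms by linarith+
    hence "a (nat x) < a (nat y)" using amono[OF m] by blast
    thus ?thesis using bnd_mid[of x n a] bnd_mid[of y n a] 3 assms by simp
  qed
qed

lemma bnd_le:
  assumes m: "\<forall>i<n. a i < a (Suc i)" and "-1 \<le> x" "y \<le> int n + 1" "x \<le> y"
  shows "bnd a n x \<le> bnd a n y"
proof (cases "x = y")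
  case True thus ?thesis by simp
next
  case False
  hence "x < y" using assms(4) by simp
  thus ?thesis using bnd_less[OF assms(1-3)] by (simp add: less_imp_le)
qed

lemma bnd_less_iff:
  assumes m: "\<forall>i<n. a i < a (Suc i)" and "-1 \<le> x" "x \<le> int n + 1" "-1 \<le> y" "y \<le> int n + 1"
  shows "bnd a n x < bnd a n y \<longleftrightarrow> x < y"
proof
  assume h: "bnd a n x < bnd a n y"
  show "x < y"
  proof (rule ccontr)
    assume "\<not> x < y"
    hence "y \<le> x" by simp
    hence "bnd a n y \<le> bnd a n x" using bnd_le[OF m assms(4) assms(3)] by simp
    thus False using h by simp
  qed
next
  assume "x < y"
  thus "bnd a n x < bnd a n y" using bnd_less[OF m assms(2) assms(5)] by simp
qed

lemma oint_convex:
  assumes "x \<in> oint l u" "z \<in> oint l u" "x \<le> y" "y \<le> z"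
  shows "y \<in> oint l u"
proof -
  have "l < ereal x" "ereal z < u" using assms unfolding oint_def by auto
  moreover have "ereal x \<le> ereal y" "ereal y \<le> ereal z" using assms by auto
  ultimately have "l < ereal y" "ereal y < u"
    using less_le_trans[of l "ereal x" "ereal y"] le_less_trans[of "ereal y" "ereal z" u] by blast+
  thus ?thesis unfolding oint_def by auto
qed

lemma oint_union:
  assumes "l1 \<le> l2" "l2 < u1" "u1 \<le> u2"
  shows "oint l1 u1 \<union> oint l2 u2 = oint l1 u2"
proof -
  have "x \<in> oint l1 u1 \<or> x \<in> oint l2 u2" if "x \<in> oint l1 u2" for x
  proof (cases "ereal x < u1")
    case True then show ?thesis using that unfolding oint_def by auto
  next
    case False then have "l2 < ereal x" using assms(2) by auto
    then show ?thesis using that unfolding oint_def by auto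
  qed
  moreover have "oint l1 u1 \<subseteq> oint l1 u2" "oint l2 u2 \<subseteq> oint l1 u2"
    using assms unfolding oint_def by (auto intro: less_le_trans le_less_trans)
  ultimately show ?thesis by blast
qed

lemma oint_Int2:
  assumes "l1 \<le> l2" "u1 \<le> u2"
  shows "oint l1 u1 \<inter> oint l2 u2 = oint l2 u1"
  using oint_Int[of l1 u1 l2 u2] assms by (simp add: max_def min_def)

lemma is_oint_oint[simp]: "is_oint (oint l u)"
  unfolding is_oint_def by blast

lemma transport:
  assumes cF: "constructible_wrt F Fm S" and cG: "constructible_wrt G Gm S"
    and nt: "nat_trans F Fm G Gm \<psi>" and oI: "is_oint I" and oJ: "is_oint J"
    and sub: "I \<subseteq> J" and eq: "I \<inter> S = J \<inter> S"
    and bJ: "bij_betw (\<psi> J) (F J) (G J)"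
  shows "bij_betw (\<psi> I) (F I) (G I)"
proof -
  have bF: "bij_betw (Fm I J) (F I) (F J)" using cw_bij[OF cF oI oJ sub eq] .
  have bG: "bij_betw (Gm I J) (G I) (G J)" using cw_bij[OF cG oI oJ sub eq] .
  have nat: "\<And>x. x \<in> F I \<Longrightarrow> \<psi> J (Fm I J x) = Gm I J (\<psi> I x)" using nt_nat[OF nt oI oJ sub] .
  have into: "\<And>x. x \<in> F I \<Longrightarrow> \<psi> I x \<in> G I" using nt_into[OF nt oI] .
  have inj: "inj_on (\<psi> I) (F I)"
  proof (rule inj_onI)
    fix x y assume x: "x \<in> F I" and y: "y \<in> F I" and e: "\<psi> I x = \<psi> I y"
    have "\<psi> J (Fm I J x) = \<psi> J (Fm I J y)" using nat x y e by simp
    moreover have "Fm I J x \<in> F J" "Fm I J y \<in> F J" using bF x y unfolding bij_betw_def by auto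
    ultimately have "Fm I J x = Fm I J y" using bJ unfolding bij_betw_def inj_on_def by blast
    thus "x = y" using bF x y unfolding bij_betw_def inj_on_def by blast
  qed
  have onto: "G I \<subseteq> \<psi> I ` F I"
  proof
    fix y assume y: "y \<in> G I"
    have "Gm I J y \<in> G J" using bG y unfolding bij_betw_def by auto
    then obtain x' where x': "x' \<in> F J" "\<psi> J x' = Gm I J y" using bJ unfolding bij_betw_def by force
    then obtain x where x: "x \<in> F I" "Fm I J x = x'" using bF unfolding bij_betw_def by force
    have "Gm I J (\<psi> I x) = Gm I J y" using nat[OF x(1)] x x' by simp
    hence "\<psi> I x = y" using bG into[OF x(1)] y unfolding bij_betw_def inj_on_def by blast
    thus "y \<in> \<psi> I ` F I" using x by blast
  qed
  show ?thesis unfolding bij_betw_def using inj into onto by blast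
qed

theorem mainTheorem5:
  fixes F :: "real set \<Rightarrow> 'a set" and Fm :: "real set \<Rightarrow> real set \<Rightarrow> 'a \<Rightarrow> 'a"
    and G :: "real set \<Rightarrow> 'b set" and Gm :: "real set \<Rightarrow> real set \<Rightarrow> 'b \<Rightarrow> 'b"
    and \<psi> :: "real set \<Rightarrow> 'a \<Rightarrow> 'b"
    and a :: "nat \<Rightarrow> real" and n :: nat
  assumes "cosheaf F Fm" and "cosheaf G Gm"
    and "\<forall>i<n. a i < a (Suc i)"
    and "constructible_wrt F Fm (a ` {0..n})" and "constructible_wrt G Gm (a ` {0..n})"
    and "nat_trans F Fm G Gm \<psi>"
    and "\<forall>i::int. 0 \<le> i \<and> i \<le> int n \<longrightarrow>
           bij_betw (\<psi> (oint (bnd a n (i - 1)) (bnd a n (i + 1))))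
                    (F (oint (bnd a n (i - 1)) (bnd a n (i + 1))))
                    (G (oint (bnd a n (i - 1)) (bnd a n (i + 1))))"
    and "\<forall>i::int. 0 \<le> i \<and> i \<le> int n - 1 \<longrightarrow>
           bij_betw (\<psi> (oint (bnd a n i) (bnd a n (i + 1))))
                    (F (oint (bnd a n i) (bnd a n (i + 1))))
                    (G (oint (bnd a n i) (bnd a n (i + 1))))"
  shows "nat_iso F Fm G Gm \<psi>"
proof -
  note m = assms(3)
  note nt = assms(6)
  define S where "S = a ` {0..n}"
  have cF: "constructible_wrt F Fm S" using assms(4) S_def by simp
  have cG: "constructible_wrt G Gm S" using assms(5) S_def by simp
  have aS: "\<And>k. k \<le> n \<Longrightarrow> a k \<in> S" unfolding S_def by simp
  have Sa: "\<And>x. x \<in> S \<Longrightarrow> \<exists>k\<le>n. x = a k" unfolding S_def by auto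
  let ?b = "bnd a n"
  have chain: "q \<le> n \<longrightarrow> bij_betw (\<psi> (oint (?b (int p - 1)) (?b (int q + 1))))
      (F (oint (?b (int p - 1)) (?b (int q + 1)))) (G (oint (?b (int p - 1)) (?b (int q + 1))))"
    if pq: "p \<le> q" for p q
    using pq
  proof (induction q rule: dec_induct)
    case base
    show ?case using assms(7)[rule_format, of "int p"] by auto
  next
    case (step k)
    show ?case
    proof
      assume kn: "Suc k \<le> n"
      define A where "A = oint (?b (int p - 1)) (?b (int k + 1))"
      define B where "B = oint (?b (int k + 1 - 1)) (?b (int k + 1 + 1))"
      define C where "C = oint (?b (int k)) (?b (int k + 1))"
      define U where "U = oint (?b (int p - 1)) (?b (int k + 1 + 1))"
      have bA: "bij_betw (\<psi> A) (F A) (G A)" using step.IH kn unfolding A_def by auto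
      have bB: "bij_betw (\<psi> B) (F B) (G B)" unfolding B_def
        by (rule assms(7)[rule_format]) (use kn in simp)
      have bC: "bij_betw (\<psi> C) (F C) (G C)" unfolding C_def
        by (rule assms(8)[rule_format]) (use kn in simp)
      have l1: "?b (int p - 1) \<le> ?b (int k + 1 - 1)" using bnd_le[OF m] step.hyps kn by simp
      have l2: "?b (int k + 1 - 1) < ?b (int k + 1)" using bnd_less[OF m] kn by simp
      have l3: "?b (int k + 1) \<le> ?b (int k + 1 + 1)" using bnd_le[OF m] kn by simp
      have AB: "A \<union> B = U" unfolding A_def B_def U_def using oint_union[OF l1 l2 l3] .
      have AiB: "A \<inter> B = C" unfolding A_def B_def C_def using oint_Int2[OF l1 l3] by simp
      have "bij_betw (\<psi> U) (F U) (G U)"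
      proof (rule glue_bij[OF assms(1,2) nt, of U "{A, B}"])
        show "is_oint U" unfolding U_def by simp
        show "\<forall>I\<in>{A, B}. is_oint I" unfolding A_def B_def by simp
        show "\<Union> {A, B} = U" using AB by simp
        show "\<forall>I\<in>{A, B}. \<forall>J\<in>{A, B}. bij_betw (\<psi> (I \<inter> J)) (F (I \<inter> J)) (G (I \<inter> J))"
          using bA bB bC AiB by (auto simp: Int_commute)
      qed
      thus "bij_betw (\<psi> (oint (?b (int p - 1)) (?b (int (Suc k) + 1))))
        (F (oint (?b (int p - 1)) (?b (int (Suc k) + 1)))) (G (oint (?b (int p - 1)) (?b (int (Suc k) + 1))))"
        unfolding U_def by (simp add: add.commute)
    qed
  qed
  have allbij: "bij_betw (\<psi> I) (F I) (G I)" if oI: "is_oint I" for I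
  proof -
    obtain l u where Ilu: "I = oint l u" using oI unfolding is_oint_def by blast
    have conv: "\<And>x y z. x \<in> I \<Longrightarrow> z \<in> I \<Longrightarrow> x \<le> y \<Longrightarrow> y \<le> z \<Longrightarrow> y \<in> I"
      using oint_convex Ilu by blast
    show ?thesis
    proof (cases "I \<inter> S = {}")
      case False
      define K where "K = {k. k \<le> n \<and> a k \<in> I}"
      have finK: "finite K" unfolding K_def by simp
      have neK: "K \<noteq> {}"
      proof -
        obtain x where "x \<in> I" "x \<in> S" using False by blast
        then obtain k where "k \<le> n" "a k \<in> I" using Sa by metis
        thus ?thesis unfolding K_def by blast
      qed
      define p where "p = Min K"
      define q where "q = Max K"
      have pK: "p \<in> K" and qK: "q \<in> K" unfolding p_def q_def using finK neK by auto
      have pmin: "\<And>k. k \<in> K \<Longrightarrow> p \<le> k" unfolding p_def using finK by auto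
      have qmax: "\<And>k. k \<in> K \<Longrightarrow> k \<le> q" unfolding q_def using finK by auto
      have pq: "p \<le> q" using pmin qK by blast
      have qn: "q \<le> n" using qK unfolding K_def by blast
      define J where "J = oint (?b (int p - 1)) (?b (int q + 1))"
      have inI: "a k \<in> I \<longleftrightarrow> p \<le> k \<and> k \<le> q" if kn: "k \<le> n" for k
      proof
        assume "a k \<in> I" thus "p \<le> k \<and> k \<le> q" using pmin qmax kn unfolding K_def by blast
      next
        assume h: "p \<le> k \<and> k \<le> q"
        show "a k \<in> I"
          using conv[of "a p" "a q" "a k"] pK qK amono_le[OF m, of p k] amono_le[OF m, of k q] h kn qn
          unfolding K_def by auto
      qed
      have inJ: "a k \<in> J \<longleftrightarrow> p \<le> k \<and> k \<le> q" if kn: "k \<le> n" for k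
      proof -
        have "a k \<in> J \<longleftrightarrow> ?b (int p - 1) < ?b (int k) \<and> ?b (int k) < ?b (int q + 1)"
          unfolding J_def oint_def using bnd_nat[OF kn] by simp
        also have "\<dots> \<longleftrightarrow> int p - 1 < int k \<and> int k < int q + 1"
          using bnd_less_iff[OF m] kn qn pq by simp
        finally show ?thesis by linarith
      qed
      have "x \<in> I \<longleftrightarrow> x \<in> J" if xS: "x \<in> S" for x
      proof -
        obtain k where "k \<le> n" "x = a k" using Sa[OF xS] by blast
        thus ?thesis using inI inJ by simp
      qed
      hence eqS: "I \<inter> S = J \<inter> S" by blast
      have sub: "I \<subseteq> J"
      proof
        fix w assume w: "w \<in> I"
        have lo: "?b (int p - 1) < ereal w"
        proof (cases "p = 0")
          case True thus ?thesis unfolding bnd_def by simp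
        next
          case False
          have e: "?b (int p - 1) = ereal (a (p - 1))"
            using bnd_nat[of "p - 1" n a] False pq qn by (simp add: of_nat_diff)
          have "a (p - 1) < w"
          proof (rule ccontr)
            assume "\<not> a (p - 1) < w"
            hence "w \<le> a (p - 1)" by simp
            moreover have "a (p - 1) \<le> a p" using amono_le[OF m, of "p - 1" p] pq qn by simp
            ultimately have "a (p - 1) \<in> I" using conv[OF w] pK unfolding K_def by blast
            hence "p - 1 \<in> K" using pq qn unfolding K_def by simp
            thus False using pmin False by fastforce
          qed
          thus ?thesis using e by simp
        qed
        have hi: "ereal w < ?b (int q + 1)"
        proof (cases "q = n")
          case True thus ?thesis unfolding bnd_def by simp
        next
          case False
          have e: "?b (int q + 1) = ereal (a (Suc q))"
            using bnd_nat[of "Suc q" n a] False qn by (simp add: add.commute)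
          have "w < a (Suc q)"
          proof (rule ccontr)
            assume "\<not> w < a (Suc q)"
            hence "a (Suc q) \<le> w" by simp
            moreover have "a q \<le> a (Suc q)" using amono_le[OF m, of q "Suc q"] False qn by simp
            ultimately have "a (Suc q) \<in> I" using conv[OF _ w] qK unfolding K_def by blast
            hence "Suc q \<in> K" using False qn unfolding K_def by simp
            thus False using qmax by fastforce
          qed
          thus ?thesis using e by simp
        qed
        show "w \<in> J" unfolding J_def oint_def using lo hi by simp
      qed
      have bJ: "bij_betw (\<psi> J) (F J) (G J)" using chain[OF pq] qn unfolding J_def by simp
      show ?thesis using transport[OF cF cG nt oI _ sub eqS bJ] unfolding J_def by simp
    next
      case True
      show ?thesis
      proof (cases "(\<forall>s\<in>S. I \<subseteq> {..<s}) \<or> (\<forall>s\<in>S. I \<subseteq> {s<..})")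
        case True
        have "F I = {}" using cw_empty[OF cF oI True] .
        moreover have "G I = {}" using cw_empty[OF cG oI True] .
        ultimately show ?thesis by (simp add: bij_betw_def)
      next
        case nc: False
        have n1: "\<not> (\<forall>s\<in>S. I \<subseteq> {..<s})" and n2: "\<not> (\<forall>s\<in>S. I \<subseteq> {s<..})" using nc by auto
        obtain s x where s: "s \<in> S" and x: "x \<in> I" "\<not> x < s" using n1 by (auto simp: subset_iff)
        hence x2: "s \<le> x" by simp
        obtain s' y where s': "s' \<in> S" and y: "y \<in> I" "\<not> s' < y" using n2 by (auto simp: subset_iff)
        hence y2: "y \<le> s'" by simp
        have a0: "a 0 \<le> s"
        proof -
          obtain k where "k \<le> n" "s = a k" using Sa[OF s] by blast
          thus ?thesis using amono_le[OF m, of 0 k] by simp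
        qed
        have an: "s' \<le> a n"
        proof -
          obtain k where "k \<le> n" "s' = a k" using Sa[OF s'] by blast
          thus ?thesis using amono_le[OF m, of k n] by simp
        qed
        have a0S: "a 0 \<in> S" and anS: "a n \<in> S" using aS by auto
        obtain z where z: "z \<in> I" "a 0 \<le> z" "z \<le> a n"
        proof (cases "x \<le> a n")
          case True thus ?thesis using that x(1) x2 a0 by auto
        next
          case False
          hence "a n \<in> I" using conv[OF y(1) x(1)] y2 an by auto
          thus ?thesis using True anS by blast
        qed
        have z0: "a 0 < z" using z True a0S by (cases "a 0 = z") auto
        have zn: "z < a n" using z True anS by (cases "a n = z") auto
        define L where "L = {k. k \<le> n \<and> a k < z}"
        have finL: "finite L" unfolding L_def by simp
        have L0: "0 \<in> L" unfolding L_def using z0 by simp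
        define i where "i = Max L"
        have iL: "i \<in> L" unfolding i_def using finL L0 by (metis Max_in empty_iff)
        have imax: "\<And>k. k \<in> L \<Longrightarrow> k \<le> i" unfolding i_def using finL by simp
        have iz: "a i < z" and iln: "i \<le> n" using iL unfolding L_def by auto
        have ilt: "i < n" using iz zn iln by (cases "i = n") auto
        have "Suc i \<notin> L" using imax by fastforce
        hence "z \<le> a (Suc i)" using ilt unfolding L_def by auto
        moreover have "a (Suc i) \<noteq> z"
        proof
          assume "a (Suc i) = z"
          hence "z \<in> S" using aS[of "Suc i"] ilt by simp
          thus False using True z(1) by blast
        qed
        ultimately have zs: "z < a (Suc i)" by simp
        define J where "J = oint (?b (int i)) (?b (int i + 1))"
        have Jeq: "J = oint (ereal (a i)) (ereal (a (Suc i)))"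
          unfolding J_def using bnd_nat[of i n a] bnd_nat[of "Suc i" n a] ilt by (simp add: add.commute)
        have sub: "I \<subseteq> J"
        proof
          fix w assume w: "w \<in> I"
          have "a i < w"
          proof (rule ccontr)
            assume "\<not> a i < w"
            hence "a i \<in> I" using conv[OF w z(1)] iz by simp
            thus False using True aS[OF iln] by blast
          qed
          moreover have "w < a (Suc i)"
          proof (rule ccontr)
            assume "\<not> w < a (Suc i)"
            hence "a (Suc i) \<in> I" using conv[OF z(1) w] zs by simp
            thus False using True aS[of "Suc i"] ilt by auto
          qed
          ultimately show "w \<in> J" unfolding Jeq oint_def by simp
        qed
        have JS: "J \<inter> S = {}"
        proof (rule ccontr)
          assume "J \<inter> S \<noteq> {}"
          then obtain x where "x \<in> J" "x \<in> S" by blast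
          then obtain k where k: "k \<le> n" "a k \<in> J" using Sa by metis
          hence k1: "a i < a k" "a k < a (Suc i)" unfolding Jeq oint_def by auto
          show False
          proof (cases "k \<le> i")
            case True thus False using amono_le[OF m, of k i] iln k1 by simp
          next
            case False thus False using amono_le[OF m, of "Suc i" k] k k1 by simp
          qed
        qed
        have bJ: "bij_betw (\<psi> J) (F J) (G J)"
          unfolding J_def using assms(8)[rule_format, of "int i"] ilt by simp
        show ?thesis using transport[OF cF cG nt oI _ sub _ bJ] True JS unfolding J_def by simp
      qed
    qed
  qed
  define \<phi> where "\<phi> = (\<lambda>I. the_inv_into (F I) (\<psi> I))"
  have inv1: "\<phi> I (\<psi> I x) = x" if oI: "is_oint I" and x: "x \<in> F I" for I x
    unfolding \<phi>_def using the_inv_into_f_f[OF bij_betw_imp_inj_on[OF allbij[OF oI]] x] .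
  have inv2: "\<psi> I (\<phi> I y) = y" if oI: "is_oint I" and y: "y \<in> G I" for I y
  proof -
    have "y \<in> \<psi> I ` F I" using bij_betw_imp_surj_on[OF allbij[OF oI]] y by simp
    thus ?thesis unfolding \<phi>_def using f_the_inv_into_f[OF bij_betw_imp_inj_on[OF allbij[OF oI]]] by simp
  qed
  have phi_in: "\<phi> I y \<in> F I" if oI: "is_oint I" and y: "y \<in> G I" for I y
  proof -
    have "y \<in> \<psi> I ` F I" using bij_betw_imp_surj_on[OF allbij[OF oI]] y by simp
    thus ?thesis unfolding \<phi>_def
      using the_inv_into_into[OF bij_betw_imp_inj_on[OF allbij[OF oI]], of y "F I"] by simp
  qed
  have pF: "precosheaf F Fm" using cosheaf_pre[OF assms(1)] .
  have nat2: "\<phi> J (Gm I J y) = Fm I J (\<phi> I y)"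
    if oI: "is_oint I" and oJ: "is_oint J" and sub: "I \<subseteq> J" and y: "y \<in> G I" for I J y
  proof -
    have x: "\<phi> I y \<in> F I" using phi_in[OF oI y] .
    have fx: "Fm I J (\<phi> I y) \<in> F J" using pc_into[OF pF oI oJ sub x] .
    have "\<psi> J (Fm I J (\<phi> I y)) = Gm I J (\<psi> I (\<phi> I y))" using nt_nat[OF nt oI oJ sub x] .
    also have "\<dots> = Gm I J y" using inv2[OF oI y] by simp
    finally have "\<phi> J (Gm I J y) = \<phi> J (\<psi> J (Fm I J (\<phi> I y)))" by simp
    also have "\<dots> = Fm I J (\<phi> I y)" using inv1[OF oJ fx] .
    finally show ?thesis .
  qed
  have ntphi: "nat_trans G Gm F Fm \<phi>"
    unfolding nat_trans_def
  proof (intro conjI allI impI ballI)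
    fix I y assume "is_oint I" "y \<in> G I" thus "\<phi> I y \<in> F I" by (rule phi_in)
  next
    fix I J y assume h: "is_oint I \<and> is_oint J \<and> I \<subseteq> J" and y: "y \<in> G I"
    show "\<phi> J (Gm I J y) = Fm I J (\<phi> I y)" using nat2 h y by blast
  qed
  have invs: "\<forall>I. is_oint I \<longrightarrow> (\<forall>x\<in>F I. \<phi> I (\<psi> I x) = x) \<and> (\<forall>y\<in>G I. \<psi> I (\<phi> I y) = y)"
    using inv1 inv2 by blast
  show ?thesis unfolding nat_iso_def
    by (rule conjI[OF nt], rule exI[of _ \<phi>], rule conjI[OF ntphi invs])
qed

end
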